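(* Let $G$ be a graph that is both weakly $4$-choosable and $\{1,1,2\}$-choosable. If $L$ is an assignment of $G$ with $|L(v)|=4$ for all $v$ (colours being integers) and $\|L\|=3$, then $G$ has a proper colouring $f$ with $f(v)\in L(v)$ for all $v$.
   Context: $\|L\|=|\{L(x):x\in V(G)\}|$ is the number of distinct lists. A set $I$ of integers is symmetric if $i\in I$ implies $-i\in I$. $G$ is weakly $4$-choosable if it is $L$-colourable (has a proper colouring $f$ with $f(v)\in L(v)$) for every assignment $L$ in which each $L(v)$ is a symmetric set of $4$ integers. For a partition $\lambda=\{k_1,\dots,k_q\}$ of $k$, a $\lambda$-assignment of $G$ is an assignment $L$ with $|L(v)|=k$ for all $v$ such that $\bigcup_vL(v)$ can be partitioned into sets $C_1,\dots,C_q$ with $|L(v)\cap C_i|=k_i$ for all $v$ and $i$; $G$ is $\lambda$-choosable if it is $L$-colourable for every $\lambda$-assignment $L$. *)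

theory Defs
  imports Main
begin

text \<open>A finite simple graph: finite vertex set V, symmetric irreflexive adjacency E
  (only edges between vertices of V matter).\<close>
definition graph :: "'a set \<Rightarrow> ('a \<Rightarrow> 'a \<Rightarrow> bool) \<Rightarrow> bool" where
  "graph V E \<longleftrightarrow> finite V \<and> (\<forall>u v. E u v \<longrightarrow> E v u) \<and> (\<forall>v. \<not> E v v)"

definition L_colouring :: "'a set \<Rightarrow> ('a \<Rightarrow> 'a \<Rightarrow> bool) \<Rightarrow> ('a \<Rightarrow> int set) \<Rightarrow> ('a \<Rightarrow> int) \<Rightarrow> bool" where
  "L_colouring V E L f \<longleftrightarrow>
     (\<forall>v\<in>V. f v \<in> L v) \<and> (\<forall>u\<in>V. \<forall>v\<in>V. E u v \<longrightarrow> f u \<noteq> f v)"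

definition L_colourable :: "'a set \<Rightarrow> ('a \<Rightarrow> 'a \<Rightarrow> bool) \<Rightarrow> ('a \<Rightarrow> int set) \<Rightarrow> bool" where
  "L_colourable V E L \<longleftrightarrow> (\<exists>f. L_colouring V E L f)"

definition symmetric_set :: "int set \<Rightarrow> bool" where
  "symmetric_set I \<longleftrightarrow> (\<forall>i\<in>I. - i \<in> I)"

definition weakly_4_choosable :: "'a set \<Rightarrow> ('a \<Rightarrow> 'a \<Rightarrow> bool) \<Rightarrow> bool" where
  "weakly_4_choosable V E \<longleftrightarrow>
     (\<forall>L. (\<forall>v\<in>V. symmetric_set (L v) \<and> finite (L v) \<and> card (L v) = 4) \<longrightarrow> L_colourable V E L)"

text \<open>lambda-assignment for a partition given as the list ks = [k_1,...,k_q] of k = sum ks: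
  the union of the lists is partitioned into C_0,...,C_(q-1) with |L(v) \<inter> C_i| = k_i.\<close>
definition lambda_assignment :: "nat list \<Rightarrow> 'a set \<Rightarrow> ('a \<Rightarrow> int set) \<Rightarrow> bool" where
  "lambda_assignment ks V L \<longleftrightarrow>
     (\<forall>v\<in>V. finite (L v) \<and> card (L v) = sum_list ks) \<and>
     (\<exists>C :: nat \<Rightarrow> int set.
        (\<Union>i<length ks. C i) = (\<Union>v\<in>V. L v) \<and>
        (\<forall>i<length ks. \<forall>j<length ks. i \<noteq> j \<longrightarrow> C i \<inter> C j = {}) \<and>
        (\<forall>v\<in>V. \<forall>i<length ks. card (L v \<inter> C i) = ks ! i))"

definition lambda_choosable :: "nat list \<Rightarrow> 'a set \<Rightarrow> ('a \<Rightarrow> 'a \<Rightarrow> bool) \<Rightarrow> bool" where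
  "lambda_choosable ks V E \<longleftrightarrow> (\<forall>L. lambda_assignment ks V L \<longrightarrow> L_colourable V E L)"

definition num_lists :: "'a set \<Rightarrow> ('a \<Rightarrow> int set) \<Rightarrow> nat" where
  "num_lists V L = card (L ` V)"

end

theory Submission imports Defs begin

lemma count_cases:
  fixes nP nQ nR nPQ nPR nQR nPQR :: nat
  assumes "nP + nPQ + nPR + nPQR = 4" "nQ + nPQ + nQR + nPQR = 4" "nR + nPR + nQR + nPQR = 4"
    and "\<not> (nP = 0 \<and> nQ = 0 \<and> nPR = 0 \<and> nQR = 0)"
    and "\<not> (nP = 0 \<and> nR = 0 \<and> nPQ = 0 \<and> nQR = 0)"
    and "\<not> (nQ = 0 \<and> nR = 0 \<and> nPQ = 0 \<and> nPR = 0)"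
    and "\<not> (nPQ = 2 \<and> nPR = 2 \<and> nQR = 2)"
  shows "(nPQR \<ge> 2) \<or> (nPQR \<ge> 1 \<and> nPQ \<ge> 1 \<and> nR \<ge> 1) \<or> (nPQR \<ge> 1 \<and> nPR \<ge> 1 \<and> nQ \<ge> 1) \<or> (nPQR \<ge> 1 \<and> nQR \<ge> 1 \<and> nP \<ge> 1) \<or> (nPQR \<ge> 1 \<and> nP \<ge> 1 \<and> nQ \<ge> 1 \<and> nR \<ge> 1) \<or> (nPQ \<ge> 2 \<and> nR \<ge> 2) \<or> (nPQ \<ge> 1 \<and> nR \<ge> 1 \<and> nPR \<ge> 1 \<and> nQ \<ge> 1) \<or> (nPQ \<ge> 1 \<and> nR \<ge> 1 \<and> nQR \<ge> 1 \<and> nP \<ge> 1) \<or> (nPQ \<ge> 1 \<and> nR \<ge> 2 \<and> nP \<ge> 1 \<and> nQ \<ge> 1) \<or> (nPR \<ge> 2 \<and> nQ \<ge> 2) \<or> (nPR \<ge> 1 \<and> nQ \<ge> 1 \<and> nQR \<ge> 1 \<and> nP \<ge> 1) \<or> (nPR \<ge> 1 \<and> nQ \<ge> 2 \<and> nP \<ge> 1 \<and> nR \<ge> 1) \<or> (nQR \<ge> 2 \<and> nP \<ge> 2) \<or> (nQR \<ge> 1 \<and> nP \<ge> 2 \<and> nQ \<ge> 1 \<and> nR \<ge> 1) \<or> (nP \<ge> 2 \<and> nQ \<ge> 2 \<and> nR \<ge> 2)"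
  proof -
  have c: "\<And>n::nat. n \<le> 4 \<Longrightarrow> n=0 \<or> n=1 \<or> n=2 \<or> n=3 \<or> n=4" by auto
  have "nPQR \<le> 4" "nPQ \<le> 4" "nPR \<le> 4" "nQR \<le> 4" using assms by linarith+
  then show ?thesis using assms
    apply -
    apply (drule c)+
    apply (elim disjE)
    apply (simp_all)
    done
qed

lemma count_lemma:
  fixes nP nQ nR nPQ nPR nQR nPQR :: nat
  assumes "nP + nPQ + nPR + nPQR = 4" "nQ + nPQ + nQR + nPQR = 4" "nR + nPR + nQR + nPQR = 4"
    and "\<not> (nP = 0 \<and> nQ = 0 \<and> nPR = 0 \<and> nQR = 0)"
    and "\<not> (nP = 0 \<and> nR = 0 \<and> nPQ = 0 \<and> nQR = 0)"
    and "\<not> (nQ = 0 \<and> nR = 0 \<and> nPQ = 0 \<and> nPR = 0)"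
    and "\<not> (nPQ = 2 \<and> nPR = 2 \<and> nQR = 2)"
  shows "\<exists>a1 b1 c1 d1 e1 f1 g1 a2 b2 c2 d2 e2 f2 g2.
    a1 + d1 + e1 + g1 = (1::nat) \<and> b1 + d1 + f1 + g1 = 1 \<and> c1 + e1 + f1 + g1 = 1 \<and>
    a2 + d2 + e2 + g2 = (1::nat) \<and> b2 + d2 + f2 + g2 = 1 \<and> c2 + e2 + f2 + g2 = 1 \<and>
    a1 + a2 \<le> nP \<and> b1 + b2 \<le> nQ \<and> c1 + c2 \<le> nR \<and> d1 + d2 \<le> nPQ \<and>
    e1 + e2 \<le> nPR \<and> f1 + f2 \<le> nQR \<and> g1 + g2 \<le> nPQR"
  using count_cases[OF assms]
  apply (elim disjE)
   apply (rule_tac x="0" in exI, rule_tac x="0" in exI, rule_tac x="0" in exI, rule_tac x="0" in exI, rule_tac x="0" in exI, rule_tac x="0" in exI, rule_tac x="1" in exI, rule_tac x="0" in exI, rule_tac x="0" in exI, rule_tac x="0" in exI, rule_tac x="0" in exI, rule_tac x="0" in exI, rule_tac x="0" in exI, rule_tac x="1" in exI, simp)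
   apply (rule_tac x="0" in exI, rule_tac x="0" in exI, rule_tac x="0" in exI, rule_tac x="0" in exI, rule_tac x="0" in exI, rule_tac x="0" in exI, rule_tac x="1" in exI, rule_tac x="0" in exI, rule_tac x="0" in exI, rule_tac x="1" in exI, rule_tac x="1" in exI, rule_tac x="0" in exI, rule_tac x="0" in exI, rule_tac x="0" in exI, simp)
   apply (rule_tac x="0" in exI, rule_tac x="0" in exI, rule_tac x="0" in exI, rule_tac x="0" in exI, rule_tac x="0" in exI, rule_tac x="0" in exI, rule_tac x="1" in exI, rule_tac x="0" in exI, rule_tac x="1" in exI, rule_tac x="0" in exI, rule_tac x="0" in exI, rule_tac x="1" in exI, rule_tac x="0" in exI, rule_tac x="0" in exI, simp)
   apply (rule_tac x="0" in exI, rule_tac x="0" in exI, rule_tac x="0" in exI, rule_tac x="0" in exI, rule_tac x="0" in exI, rule_tac x="0" in exI, rule_tac x="1" in exI, rule_tac x="1" in exI, rule_tac x="0" in exI, rule_tac x="0" in exI, rule_tac x="0" in exI, rule_tac x="0" in exI, rule_tac x="1" in exI, rule_tac x="0" in exI, simp)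
   apply (rule_tac x="0" in exI, rule_tac x="0" in exI, rule_tac x="0" in exI, rule_tac x="0" in exI, rule_tac x="0" in exI, rule_tac x="0" in exI, rule_tac x="1" in exI, rule_tac x="1" in exI, rule_tac x="1" in exI, rule_tac x="1" in exI, rule_tac x="0" in exI, rule_tac x="0" in exI, rule_tac x="0" in exI, rule_tac x="0" in exI, simp)
   apply (rule_tac x="0" in exI, rule_tac x="0" in exI, rule_tac x="1" in exI, rule_tac x="1" in exI, rule_tac x="0" in exI, rule_tac x="0" in exI, rule_tac x="0" in exI, rule_tac x="0" in exI, rule_tac x="0" in exI, rule_tac x="1" in exI, rule_tac x="1" in exI, rule_tac x="0" in exI, rule_tac x="0" in exI, rule_tac x="0" in exI, simp)
   apply (rule_tac x="0" in exI, rule_tac x="0" in exI, rule_tac x="1" in exI, rule_tac x="1" in exI, rule_tac x="0" in exI, rule_tac x="0" in exI, rule_tac x="0" in exI, rule_tac x="0" in exI, rule_tac x="1" in exI, rule_tac x="0" in exI, rule_tac x="0" in exI, rule_tac x="1" in exI, rule_tac x="0" in exI, rule_tac x="0" in exI, simp)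
   apply (rule_tac x="0" in exI, rule_tac x="0" in exI, rule_tac x="1" in exI, rule_tac x="1" in exI, rule_tac x="0" in exI, rule_tac x="0" in exI, rule_tac x="0" in exI, rule_tac x="1" in exI, rule_tac x="0" in exI, rule_tac x="0" in exI, rule_tac x="0" in exI, rule_tac x="0" in exI, rule_tac x="1" in exI, rule_tac x="0" in exI, simp)
   apply (rule_tac x="0" in exI, rule_tac x="0" in exI, rule_tac x="1" in exI, rule_tac x="1" in exI, rule_tac x="0" in exI, rule_tac x="0" in exI, rule_tac x="0" in exI, rule_tac x="1" in exI, rule_tac x="1" in exI, rule_tac x="1" in exI, rule_tac x="0" in exI, rule_tac x="0" in exI, rule_tac x="0" in exI, rule_tac x="0" in exI, simp)
   apply (rule_tac x="0" in exI, rule_tac x="1" in exI, rule_tac x="0" in exI, rule_tac x="0" in exI, rule_tac x="1" in exI, rule_tac x="0" in exI, rule_tac x="0" in exI, rule_tac x="0" in exI, rule_tac x="1" in exI, rule_tac x="0" in exI, rule_tac x="0" in exI, rule_tac x="1" in exI, rule_tac x="0" in exI, rule_tac x="0" in exI, simp)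
   apply (rule_tac x="0" in exI, rule_tac x="1" in exI, rule_tac x="0" in exI, rule_tac x="0" in exI, rule_tac x="1" in exI, rule_tac x="0" in exI, rule_tac x="0" in exI, rule_tac x="1" in exI, rule_tac x="0" in exI, rule_tac x="0" in exI, rule_tac x="0" in exI, rule_tac x="0" in exI, rule_tac x="1" in exI, rule_tac x="0" in exI, simp)
   apply (rule_tac x="0" in exI, rule_tac x="1" in exI, rule_tac x="0" in exI, rule_tac x="0" in exI, rule_tac x="1" in exI, rule_tac x="0" in exI, rule_tac x="0" in exI, rule_tac x="1" in exI, rule_tac x="1" in exI, rule_tac x="1" in exI, rule_tac x="0" in exI, rule_tac x="0" in exI, rule_tac x="0" in exI, rule_tac x="0" in exI, simp)
   apply (rule_tac x="1" in exI, rule_tac x="0" in exI, rule_tac x="0" in exI, rule_tac x="0" in exI, rule_tac x="0" in exI, rule_tac x="1" in exI, rule_tac x="0" in exI, rule_tac x="1" in exI, rule_tac x="0" in exI, rule_tac x="0" in exI, rule_tac x="0" in exI, rule_tac x="0" in exI, rule_tac x="1" in exI, rule_tac x="0" in exI, simp)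
   apply (rule_tac x="1" in exI, rule_tac x="0" in exI, rule_tac x="0" in exI, rule_tac x="0" in exI, rule_tac x="0" in exI, rule_tac x="1" in exI, rule_tac x="0" in exI, rule_tac x="1" in exI, rule_tac x="1" in exI, rule_tac x="1" in exI, rule_tac x="0" in exI, rule_tac x="0" in exI, rule_tac x="0" in exI, rule_tac x="0" in exI, simp)
   apply (rule_tac x="1" in exI, rule_tac x="1" in exI, rule_tac x="1" in exI, rule_tac x="0" in exI, rule_tac x="0" in exI, rule_tac x="0" in exI, rule_tac x="0" in exI, rule_tac x="1" in exI, rule_tac x="1" in exI, rule_tac x="1" in exI, rule_tac x="0" in exI, rule_tac x="0" in exI, rule_tac x="0" in exI, rule_tac x="0" in exI, simp)
  done


lemma split2:
  assumes "finite S" "a + b \<le> card S"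
  shows "\<exists>K1 K2. K1 \<subseteq> S \<and> K2 \<subseteq> S \<and> K1 \<inter> K2 = {} \<and> card K1 = a \<and> card K2 = b"
proof -
  obtain K where K: "K \<subseteq> S" "card K = a + b" using obtain_subset_with_card_n[OF assms(2)] by metis
  have fK: "finite K" using K(1) assms(1) finite_subset by blast
  obtain K1 where K1: "K1 \<subseteq> K" "card K1 = a" using obtain_subset_with_card_n[of a K] K(2) by auto
  have "card (K - K1) = b" using K1 K(2) fK by (simp add: card_Diff_subset finite_subset)
  then show ?thesis using K K1 by (intro exI[of _ K1] exI[of _ "K - K1"]) auto
qed

lemma card4:
  assumes "finite A" "finite B" "finite C" "finite D"
    "A \<inter> B = {}" "A \<inter> C = {}" "A \<inter> D = {}" "B \<inter> C = {}" "B \<inter> D = {}" "C \<inter> D = {}"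
  shows "card (A \<union> B \<union> C \<union> D) = card A + card B + card C + card D"
proof -
  have "card (A \<union> B) = card A + card B" using assms by (simp add: card_Un_disjoint)
  moreover have "card (A \<union> B \<union> C) = card (A \<union> B) + card C" using assms
    by (intro card_Un_disjoint) auto
  moreover have "card (A \<union> B \<union> C \<union> D) = card (A \<union> B \<union> C) + card D" using assms
    by (intro card_Un_disjoint) auto
  ultimately show ?thesis by simp
qed

lemma transversals:
  fixes P Q R :: "int set"
  assumes fin: "finite P" "finite Q" "finite R"
    and cards: "card P = 4" "card Q = 4" "card R = 4"
    and dist: "P \<noteq> Q" "P \<noteq> R" "Q \<noteq> R"
    and nsp: "\<not> (card (P \<inter> Q - R) = 2 \<and> card (P \<inter> R - Q) = 2 \<and> card (Q \<inter> R - P) = 2)"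
  shows "\<exists>T1 T2. T1 \<subseteq> P \<union> Q \<union> R \<and> T2 \<subseteq> P \<union> Q \<union> R \<and> T1 \<inter> T2 = {} \<and>
     card (P \<inter> T1) = 1 \<and> card (Q \<inter> T1) = 1 \<and> card (R \<inter> T1) = 1 \<and>
     card (P \<inter> T2) = 1 \<and> card (Q \<inter> T2) = 1 \<and> card (R \<inter> T2) = 1"
proof -
  define rP where "rP = P - Q - R"
  define rQ where "rQ = Q - P - R"
  define rR where "rR = R - P - Q"
  define rPQ where "rPQ = P \<inter> Q - R"
  define rPR where "rPR = P \<inter> R - Q"
  define rQR where "rQR = Q \<inter> R - P"
  define rPQR where "rPQR = P \<inter> Q \<inter> R"
  have f: "finite rP" "finite rQ" "finite rR" "finite rPQ" "finite rPR" "finite rQR" "finite rPQR"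
    using fin unfolding rP_def rQ_def rR_def rPQ_def rPR_def rQR_def rPQR_def by auto
  have "P = rP \<union> rPQ \<union> rPR \<union> rPQR"
    unfolding rP_def rPQ_def rPR_def rPQR_def by auto
  then have eP: "card rP + card rPQ + card rPR + card rPQR = 4"
    using card4[of rP rPQ rPR rPQR] f cards
    unfolding rP_def rPQ_def rPR_def rPQR_def by auto
  have "Q = rQ \<union> rPQ \<union> rQR \<union> rPQR"
    unfolding rQ_def rPQ_def rQR_def rPQR_def by auto
  then have eQ: "card rQ + card rPQ + card rQR + card rPQR = 4"
    using card4[of rQ rPQ rQR rPQR] f cards
    unfolding rQ_def rPQ_def rQR_def rPQR_def by auto
  have "R = rR \<union> rPR \<union> rQR \<union> rPQR"
    unfolding rR_def rPR_def rQR_def rPQR_def by auto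
  then have eR: "card rR + card rPR + card rQR + card rPQR = 4"
    using card4[of rR rPR rQR rPQR] f cards
    unfolding rR_def rPR_def rQR_def rPQR_def by auto
  have d1: "\<not> (card rP = 0 \<and> card rQ = 0 \<and> card rPR = 0 \<and> card rQR = 0)"
  proof
    assume "card rP = 0 \<and> card rQ = 0 \<and> card rPR = 0 \<and> card rQR = 0"
    then have "rP = {}" "rQ = {}" "rPR = {}" "rQR = {}" using f by auto
    then have "P = Q" unfolding rP_def rQ_def rPR_def rQR_def by blast
    then show False using dist by simp
  qed
  have d2: "\<not> (card rP = 0 \<and> card rR = 0 \<and> card rPQ = 0 \<and> card rQR = 0)"
  proof
    assume "card rP = 0 \<and> card rR = 0 \<and> card rPQ = 0 \<and> card rQR = 0"
    then have "rP = {}" "rR = {}" "rPQ = {}" "rQR = {}" using f by auto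
    then have "P = R" unfolding rP_def rR_def rPQ_def rQR_def by blast
    then show False using dist by simp
  qed
  have d3: "\<not> (card rQ = 0 \<and> card rR = 0 \<and> card rPQ = 0 \<and> card rPR = 0)"
  proof
    assume "card rQ = 0 \<and> card rR = 0 \<and> card rPQ = 0 \<and> card rPR = 0"
    then have "rQ = {}" "rR = {}" "rPQ = {}" "rPR = {}" using f by auto
    then have "Q = R" unfolding rQ_def rR_def rPQ_def rPR_def by blast
    then show False using dist by simp
  qed
  have d4: "\<not> (card rPQ = 2 \<and> card rPR = 2 \<and> card rQR = 2)"
    using nsp unfolding rPQ_def rPR_def rQR_def .
  obtain a1 b1 c1 d1 e1 f1 g1 a2 b2 c2 d2 e2 f2 g2 where
    n: "a1 + d1 + e1 + g1 = (1::nat)" "b1 + d1 + f1 + g1 = 1" "c1 + e1 + f1 + g1 = 1"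
    "a2 + d2 + e2 + g2 = (1::nat)" "b2 + d2 + f2 + g2 = 1" "c2 + e2 + f2 + g2 = 1"
    "a1 + a2 \<le> card rP" "b1 + b2 \<le> card rQ" "c1 + c2 \<le> card rR" "d1 + d2 \<le> card rPQ"
    "e1 + e2 \<le> card rPR" "f1 + f2 \<le> card rQR" "g1 + g2 \<le> card rPQR"
    using count_lemma[OF eP eQ eR d1 d2 d3 d4] by blast
  obtain A1 A2 where A: "A1 \<subseteq> rP" "A2 \<subseteq> rP" "A1 \<inter> A2 = {}" "card A1 = a1" "card A2 = a2"
    using split2[OF f(1) n(7)] by blast
  obtain B1 B2 where B: "B1 \<subseteq> rQ" "B2 \<subseteq> rQ" "B1 \<inter> B2 = {}" "card B1 = b1" "card B2 = b2"
    using split2[OF f(2) n(8)] by blast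
  obtain C1 C2 where C: "C1 \<subseteq> rR" "C2 \<subseteq> rR" "C1 \<inter> C2 = {}" "card C1 = c1" "card C2 = c2"
    using split2[OF f(3) n(9)] by blast
  obtain D1 D2 where D: "D1 \<subseteq> rPQ" "D2 \<subseteq> rPQ" "D1 \<inter> D2 = {}" "card D1 = d1" "card D2 = d2"
    using split2[OF f(4) n(10)] by blast
  obtain E1 E2 where E: "E1 \<subseteq> rPR" "E2 \<subseteq> rPR" "E1 \<inter> E2 = {}" "card E1 = e1" "card E2 = e2"
    using split2[OF f(5) n(11)] by blast
  obtain F1 F2 where F: "F1 \<subseteq> rQR" "F2 \<subseteq> rQR" "F1 \<inter> F2 = {}" "card F1 = f1" "card F2 = f2"
    using split2[OF f(6) n(12)] by blast
  obtain G1 G2 where G: "G1 \<subseteq> rPQR" "G2 \<subseteq> rPQR" "G1 \<inter> G2 = {}" "card G1 = g1" "card G2 = g2"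
    using split2[OF f(7) n(13)] by blast
  have fs: "finite A1" "finite A2" "finite B1" "finite B2" "finite C1" "finite C2"
    "finite D1" "finite D2" "finite E1" "finite E2" "finite F1" "finite F2" "finite G1" "finite G2"
    using A B C D E F G f finite_subset by metis+
  note defs = rP_def rQ_def rR_def rPQ_def rPR_def rQR_def rPQR_def
  note Au = A[unfolded defs]
  note Bu = B[unfolded defs]
  note Cu = C[unfolded defs]
  note Du = D[unfolded defs]
  note Eu = E[unfolded defs]
  note Fu = F[unfolded defs]
  note Gu = G[unfolded defs]
  define T1 where "T1 = A1 \<union> B1 \<union> C1 \<union> D1 \<union> E1 \<union> F1 \<union> G1"
  define T2 where "T2 = A2 \<union> B2 \<union> C2 \<union> D2 \<union> E2 \<union> F2 \<union> G2"
  have sub: "T1 \<subseteq> P \<union> Q \<union> R" "T2 \<subseteq> P \<union> Q \<union> R"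
    using A B C D E F G unfolding T1_def T2_def defs by blast+
  have disj0: "False" if x1: "x \<in> T1" and x2: "x \<in> T2" for x
  proof -
    have m1: "x \<in> A1 \<longrightarrow> x \<in> P \<and> x \<notin> Q \<and> x \<notin> R" using A(1) unfolding defs by blast
    have m2: "x \<in> A2 \<longrightarrow> x \<in> P \<and> x \<notin> Q \<and> x \<notin> R" using A(2) unfolding defs by blast
    have m3: "x \<in> A1 \<longrightarrow> x \<notin> A2" using A(3) by blast
    have m4: "x \<in> B1 \<longrightarrow> x \<notin> P \<and> x \<in> Q \<and> x \<notin> R" using B(1) unfolding defs by blast
    have m5: "x \<in> B2 \<longrightarrow> x \<notin> P \<and> x \<in> Q \<and> x \<notin> R" using B(2) unfolding defs by blast
    have m6: "x \<in> B1 \<longrightarrow> x \<notin> B2" using B(3) by blast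
    have m7: "x \<in> C1 \<longrightarrow> x \<notin> P \<and> x \<notin> Q \<and> x \<in> R" using C(1) unfolding defs by blast
    have m8: "x \<in> C2 \<longrightarrow> x \<notin> P \<and> x \<notin> Q \<and> x \<in> R" using C(2) unfolding defs by blast
    have m9: "x \<in> C1 \<longrightarrow> x \<notin> C2" using C(3) by blast
    have m10: "x \<in> D1 \<longrightarrow> x \<in> P \<and> x \<in> Q \<and> x \<notin> R" using D(1) unfolding defs by blast
    have m11: "x \<in> D2 \<longrightarrow> x \<in> P \<and> x \<in> Q \<and> x \<notin> R" using D(2) unfolding defs by blast
    have m12: "x \<in> D1 \<longrightarrow> x \<notin> D2" using D(3) by blast
    have m13: "x \<in> E1 \<longrightarrow> x \<in> P \<and> x \<notin> Q \<and> x \<in> R" using E(1) unfolding defs by blast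
    have m14: "x \<in> E2 \<longrightarrow> x \<in> P \<and> x \<notin> Q \<and> x \<in> R" using E(2) unfolding defs by blast
    have m15: "x \<in> E1 \<longrightarrow> x \<notin> E2" using E(3) by blast
    have m16: "x \<in> F1 \<longrightarrow> x \<notin> P \<and> x \<in> Q \<and> x \<in> R" using F(1) unfolding defs by blast
    have m17: "x \<in> F2 \<longrightarrow> x \<notin> P \<and> x \<in> Q \<and> x \<in> R" using F(2) unfolding defs by blast
    have m18: "x \<in> F1 \<longrightarrow> x \<notin> F2" using F(3) by blast
    have m19: "x \<in> G1 \<longrightarrow> x \<in> P \<and> x \<in> Q \<and> x \<in> R" using G(1) unfolding defs by blast
    have m20: "x \<in> G2 \<longrightarrow> x \<in> P \<and> x \<in> Q \<and> x \<in> R" using G(2) unfolding defs by blast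
    have m21: "x \<in> G1 \<longrightarrow> x \<notin> G2" using G(3) by blast
    have "x \<in> A1 \<or> x \<in> B1 \<or> x \<in> C1 \<or> x \<in> D1 \<or> x \<in> E1 \<or> x \<in> F1 \<or> x \<in> G1" using x1 unfolding T1_def by blast
    moreover have "x \<in> A2 \<or> x \<in> B2 \<or> x \<in> C2 \<or> x \<in> D2 \<or> x \<in> E2 \<or> x \<in> F2 \<or> x \<in> G2" using x2 unfolding T2_def by blast
    ultimately show False using m1 m2 m3 m4 m5 m6 m7 m8 m9 m10 m11 m12 m13 m14 m15 m16 m17 m18 m19 m20 m21 by blast
  qed
  have disj: "T1 \<inter> T2 = {}" using disj0 by blast
  have "P \<inter> T1 = A1 \<union> D1 \<union> E1 \<union> G1" using Au(1) Bu(1) Cu(1) Du(1) Eu(1) Fu(1) Gu(1) unfolding T1_def by blast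
  moreover have "card (A1 \<union> D1 \<union> E1 \<union> G1) = card A1 + card D1 + card E1 + card G1"
    by (rule card4[OF fs(1) fs(7) fs(9) fs(13)]) (use Au(1) Du(1) Eu(1) Gu(1) in blast)+
  ultimately have "card (P \<inter> T1) = card A1 + card D1 + card E1 + card G1" by simp
  then have c1: "card (P \<inter> T1) = 1" using n(1) A(4) D(4) E(4) G(4) by linarith
  have "Q \<inter> T1 = B1 \<union> D1 \<union> F1 \<union> G1" using Au(1) Bu(1) Cu(1) Du(1) Eu(1) Fu(1) Gu(1) unfolding T1_def by blast
  moreover have "card (B1 \<union> D1 \<union> F1 \<union> G1) = card B1 + card D1 + card F1 + card G1"
    by (rule card4[OF fs(3) fs(7) fs(11) fs(13)]) (use Bu(1) Du(1) Fu(1) Gu(1) in blast)+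
  ultimately have "card (Q \<inter> T1) = card B1 + card D1 + card F1 + card G1" by simp
  then have c2: "card (Q \<inter> T1) = 1" using n(2) B(4) D(4) F(4) G(4) by linarith
  have "R \<inter> T1 = C1 \<union> E1 \<union> F1 \<union> G1" using Au(1) Bu(1) Cu(1) Du(1) Eu(1) Fu(1) Gu(1) unfolding T1_def by blast
  moreover have "card (C1 \<union> E1 \<union> F1 \<union> G1) = card C1 + card E1 + card F1 + card G1"
    by (rule card4[OF fs(5) fs(9) fs(11) fs(13)]) (use Cu(1) Eu(1) Fu(1) Gu(1) in blast)+
  ultimately have "card (R \<inter> T1) = card C1 + card E1 + card F1 + card G1" by simp
  then have c3: "card (R \<inter> T1) = 1" using n(3) C(4) E(4) F(4) G(4) by linarith
  have "P \<inter> T2 = A2 \<union> D2 \<union> E2 \<union> G2" using Au(2) Bu(2) Cu(2) Du(2) Eu(2) Fu(2) Gu(2) unfolding T2_def by blast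
  moreover have "card (A2 \<union> D2 \<union> E2 \<union> G2) = card A2 + card D2 + card E2 + card G2"
    by (rule card4[OF fs(2) fs(8) fs(10) fs(14)]) (use Au(2) Du(2) Eu(2) Gu(2) in blast)+
  ultimately have "card (P \<inter> T2) = card A2 + card D2 + card E2 + card G2" by simp
  then have c4: "card (P \<inter> T2) = 1" using n(4) A(5) D(5) E(5) G(5) by linarith
  have "Q \<inter> T2 = B2 \<union> D2 \<union> F2 \<union> G2" using Au(2) Bu(2) Cu(2) Du(2) Eu(2) Fu(2) Gu(2) unfolding T2_def by blast
  moreover have "card (B2 \<union> D2 \<union> F2 \<union> G2) = card B2 + card D2 + card F2 + card G2"
    by (rule card4[OF fs(4) fs(8) fs(12) fs(14)]) (use Bu(2) Du(2) Fu(2) Gu(2) in blast)+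
  ultimately have "card (Q \<inter> T2) = card B2 + card D2 + card F2 + card G2" by simp
  then have c5: "card (Q \<inter> T2) = 1" using n(5) B(5) D(5) F(5) G(5) by linarith
  have "R \<inter> T2 = C2 \<union> E2 \<union> F2 \<union> G2" using Au(2) Bu(2) Cu(2) Du(2) Eu(2) Fu(2) Gu(2) unfolding T2_def by blast
  moreover have "card (C2 \<union> E2 \<union> F2 \<union> G2) = card C2 + card E2 + card F2 + card G2"
    by (rule card4[OF fs(6) fs(10) fs(12) fs(14)]) (use Cu(2) Eu(2) Fu(2) Gu(2) in blast)+
  ultimately have "card (R \<inter> T2) = card C2 + card E2 + card F2 + card G2" by simp
  then have c6: "card (R \<inter> T2) = 1" using n(6) C(5) E(5) F(5) G(5) by linarith
  show ?thesis using sub disj c1 c2 c3 c4 c5 c6 by blast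
qed


lemma third:
  assumes "finite X" "card X = 4" "X \<subseteq> U" "card (X \<inter> T1) = 1" "card (X \<inter> T2) = 1" "T1 \<inter> T2 = {}"
  shows "card (X \<inter> (U - T1 - T2)) = 2"
proof -
  have e: "X \<inter> (U - T1 - T2) = X - (X \<inter> T1 \<union> X \<inter> T2)" using assms(3) by blast
  have "card (X \<inter> T1 \<union> X \<inter> T2) = 2"
    using assms(1,4,5,6) by (subst card_Un_disjoint) auto
  moreover have "X \<inter> T1 \<union> X \<inter> T2 \<subseteq> X" by blast
  ultimately show ?thesis unfolding e using assms(1,2)
    by (subst card_Diff_subset) (auto intro: finite_subset)
qed

theorem theorem9:
  fixes V :: "'a set" and E :: "'a \<Rightarrow> 'a \<Rightarrow> bool" and L :: "'a \<Rightarrow> int set"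
  assumes "graph V E"
    and "weakly_4_choosable V E"
    and "lambda_choosable [1, 1, 2] V E"
    and "\<forall>v\<in>V. finite (L v) \<and> card (L v) = 4"
    and "num_lists V L = 3"
  shows "L_colourable V E L"
proof -
  from assms(5) obtain P Q R where LV: "L ` V = {P,Q,R}" and dist: "P \<noteq> Q" "Q \<noteq> R" "P \<noteq> R"
    unfolding num_lists_def card_3_iff by (elim exE conjE) simp
  have inL: "L v = P \<or> L v = Q \<or> L v = R" if "v \<in> V" for v
  proof -
    have "L v \<in> L ` V" using that by (rule imageI)
    then show ?thesis unfolding LV by simp
  qed
  have fc: "finite X \<and> card X = 4" if "X \<in> {P,Q,R}" for X
  proof -
    have "X \<in> L ` V" using that unfolding LV .
    then obtain v where "v \<in> V" "X = L v" by (rule imageE) simp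
    then show ?thesis using assms(4) by simp
  qed
  have fP: "finite P" "card P = 4" and fQ: "finite Q" "card Q = 4" and fR: "finite R" "card R = 4"
    using fc by auto
  have U: "(\<Union>v\<in>V. L v) = P \<union> Q \<union> R" unfolding LV by auto
  show ?thesis
  proof (cases "card (P \<inter> Q - R) = 2 \<and> card (P \<inter> R - Q) = 2 \<and> card (Q \<inter> R - P) = 2")
    case True
    then have h1: "card (P \<inter> Q - R) = 2" and h2: "card (P \<inter> R - Q) = 2" and h3: "card (Q \<inter> R - P) = 2"
      by simp_all
    obtain a b where ab: "P \<inter> Q - R = {a,b}" "a \<noteq> b" using h1 unfolding card_2_iff by blast
    obtain c d where cd: "P \<inter> R - Q = {c,d}" "c \<noteq> d" using h2 unfolding card_2_iff by blast
    obtain e f where ef: "Q \<inter> R - P = {e,f}" "e \<noteq> f" using h3 unfolding card_2_iff by blast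
    have i1: "a \<in> P \<inter> Q - R" "b \<in> P \<inter> Q - R" unfolding ab(1) by simp_all
    have i2: "c \<in> P \<inter> R - Q" "d \<in> P \<inter> R - Q" unfolding cd(1) by simp_all
    have i3: "e \<in> Q \<inter> R - P" "f \<in> Q \<inter> R - P" unfolding ef(1) by simp_all
    have mem: "a \<in> P" "a \<in> Q" "a \<notin> R" "b \<in> P" "b \<in> Q" "b \<notin> R"
      "c \<in> P" "c \<notin> Q" "c \<in> R" "d \<in> P" "d \<notin> Q" "d \<in> R"
      "e \<notin> P" "e \<in> Q" "e \<in> R" "f \<notin> P" "f \<in> Q" "f \<in> R"
      using i1 i2 i3 by simp_all
    have ne: "a \<noteq> c" "a \<noteq> d" "b \<noteq> c" "b \<noteq> d" "a \<noteq> e" "a \<noteq> f" "b \<noteq> e" "b \<noteq> f"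
      "c \<noteq> e" "c \<noteq> f" "d \<noteq> e" "d \<noteq> f"
      using mem by auto
    note neq = ne ne[symmetric] ab(2) cd(2) ef(2) ab(2)[symmetric] cd(2)[symmetric] ef(2)[symmetric]
    have s1: "{a,b,c,d} \<subseteq> P" using mem by simp
    have k1: "card {a,b,c,d} = 4" using neq by simp
    have Pe: "P = {a,b,c,d}" using card_subset_eq[OF fP(1) s1] fP(2) k1 by simp
    have s2: "{a,b,e,f} \<subseteq> Q" using mem by simp
    have k2: "card {a,b,e,f} = 4" using neq by simp
    have Qe: "Q = {a,b,e,f}" using card_subset_eq[OF fQ(1) s2] fQ(2) k2 by simp
    have s3: "{c,d,e,f} \<subseteq> R" using mem by simp
    have k3: "card {c,d,e,f} = 4" using neq by simp
    have Re: "R = {c,d,e,f}" using card_subset_eq[OF fR(1) s3] fR(2) k3 by simp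
    define \<phi> :: "int \<Rightarrow> int" where "\<phi> x = (if x = a then 1 else if x = b then -1 else if x = c then 2
       else if x = d then -2 else if x = e then 3 else if x = f then -3 else 0)" for x
    define \<psi> :: "int \<Rightarrow> int" where "\<psi> y = (if y = 1 then a else if y = -1 then b else if y = 2 then c
       else if y = -2 then d else if y = 3 then e else if y = -3 then f else 0)" for y
    have phis: "\<phi> a = 1" "\<phi> b = -1" "\<phi> c = 2" "\<phi> d = -2" "\<phi> e = 3" "\<phi> f = -3"
      unfolding \<phi>_def using neq by auto
    have inv: "\<psi> (\<phi> x) = x" if "x \<in> {a,b,c,d,e,f}" for x
      using that phis unfolding \<psi>_def by auto
    define L' where "L' v = \<phi> ` L v" for v
    have "symmetric_set (L' v) \<and> finite (L' v) \<and> card (L' v) = 4" if "v \<in> V" for v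
    proof -
      have "L' v = {1,-1,2,-2} \<or> L' v = {1,-1,3,-3} \<or> L' v = {2,-2,3,-3}"
        using inL[OF that] unfolding L'_def Pe Qe Re by (elim disjE) (simp_all add: phis)
      moreover have "symmetric_set {1,-1,2,-2::int}" "symmetric_set {1,-1,3,-3::int}" "symmetric_set {2,-2,3,-3::int}"
        unfolding symmetric_set_def by simp_all
      moreover have "card {1,-1,2,-2::int} = 4" "card {1,-1,3,-3::int} = 4" "card {2,-2,3,-3::int} = 4"
        by simp_all
      ultimately show ?thesis by (elim disjE) simp_all
    qed
    then have "L_colourable V E L'" using assms(2) unfolding weakly_4_choosable_def by blast
    then obtain g where g: "L_colouring V E L' g" unfolding L_colourable_def by blast
    have sub: "L v \<subseteq> {a,b,c,d,e,f}" if "v \<in> V" for v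
      using inL[OF that] unfolding Pe Qe Re by auto
    have gv: "\<psi> (g v) \<in> L v \<and> \<phi> (\<psi> (g v)) = g v" if "v \<in> V" for v
    proof -
      have "g v \<in> \<phi> ` L v" using g that unfolding L_colouring_def L'_def by blast
      then obtain x where x: "x \<in> L v" "g v = \<phi> x" by blast
      have "x \<in> {a,b,c,d,e,f}" using x(1) sub[OF that] by (rule subsetD[rotated])
      then have "\<psi> (\<phi> x) = x" by (rule inv)
      then have "\<psi> (g v) = x" using x(2) by simp
      then show ?thesis using x by simp
    qed
    have "L_colouring V E L (\<lambda>v. \<psi> (g v))"
      unfolding L_colouring_def
    proof (intro conjI ballI impI)
      fix v assume "v \<in> V" then show "\<psi> (g v) \<in> L v" using gv by blast
    next
      fix u v assume uv: "u \<in> V" "v \<in> V" "E u v"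
      have ne: "g u \<noteq> g v" using g uv unfolding L_colouring_def by blast
      show "\<psi> (g u) \<noteq> \<psi> (g v)"
      proof
        assume eq: "\<psi> (g u) = \<psi> (g v)"
        have "g u = \<phi> (\<psi> (g u))" using gv[OF uv(1)] by simp
        also have "\<dots> = \<phi> (\<psi> (g v))" using eq by simp
        also have "\<dots> = g v" using gv[OF uv(2)] by simp
        finally show False using ne by simp
      qed
    qed
    then show ?thesis unfolding L_colourable_def by blast
  next
    case False
    obtain T1 T2 where T: "T1 \<subseteq> P \<union> Q \<union> R" "T2 \<subseteq> P \<union> Q \<union> R" "T1 \<inter> T2 = {}"
      "card (P \<inter> T1) = 1" "card (Q \<inter> T1) = 1" "card (R \<inter> T1) = 1"
      "card (P \<inter> T2) = 1" "card (Q \<inter> T2) = 1" "card (R \<inter> T2) = 1"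
      using transversals[OF fP(1) fQ(1) fR(1) fP(2) fQ(2) fR(2) dist(1) dist(3) dist(2) False] by blast
    define C :: "nat \<Rightarrow> int set" where
      "C i = (if i = 0 then T1 else if i = 1 then T2 else P \<union> Q \<union> R - T1 - T2)" for i
    have l3: "i < length [1,1,2::nat] \<longleftrightarrow> i = 0 \<or> i = 1 \<or> i = 2" for i by auto
    have c3: "card (X \<inter> C i) = [1,1,2::nat] ! i" if "X = P \<or> X = Q \<or> X = R" "i < length [1,1,2::nat]" for X i
    proof -
      have X: "finite X" "card X = 4" "X \<subseteq> P \<union> Q \<union> R" "card (X \<inter> T1) = 1" "card (X \<inter> T2) = 1"
        using that(1) fP fQ fR T(4-9) by (elim disjE; simp; blast)+
      have t: "card (X \<inter> (P \<union> Q \<union> R - T1 - T2)) = 2" by (rule third[OF X T(3)])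
      from that(2) have "i = 0 \<or> i = 1 \<or> i = 2" by auto
      then show ?thesis using X t by (elim disjE) (simp_all add: C_def)
    qed
    have "lambda_assignment [1,1,2] V L"
      unfolding lambda_assignment_def
    proof (intro conjI exI[of _ C])
      show "\<forall>v\<in>V. finite (L v) \<and> card (L v) = sum_list [1,1,2::nat]" using assms(4) by simp
      have "{..<length [1,1,2::nat]} = {0,1,2}" by auto
      then have "(\<Union>i<length [1,1,2::nat]. C i) = C 0 \<union> C 1 \<union> C 2" by auto
      also have "\<dots> = P \<union> Q \<union> R" unfolding C_def using T(1,2) by auto
      finally show "(\<Union>i<length [1,1,2::nat]. C i) = (\<Union>v\<in>V. L v)" using U by simp
      show "\<forall>i<length [1,1,2::nat]. \<forall>j<length [1,1,2::nat]. i \<noteq> j \<longrightarrow> C i \<inter> C j = {}"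
      proof (intro allI impI)
        fix i j assume "i < length [1,1,2::nat]" "j < length [1,1,2::nat]" "i \<noteq> j"
        then have "(i = 0 \<or> i = 1 \<or> i = 2) \<and> (j = 0 \<or> j = 1 \<or> j = 2) \<and> i \<noteq> j" by auto
        then show "C i \<inter> C j = {}" using T(3) unfolding C_def by (elim conjE disjE) auto
      qed
      show "\<forall>v\<in>V. \<forall>i<length [1,1,2::nat]. card (L v \<inter> C i) = [1,1,2] ! i"
        using c3 inL by simp
    qed
    then show ?thesis using assms(3) unfolding lambda_choosable_def by blast
  qed
qed

end
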